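(* Fix a nominal pair $(z_k,v_k)\in\mathcal{X}\times\mathcal{U}$ and a set $\mathcal{R}_k\subseteq\mathcal{X}\times\mathcal{U}$ containing it. Let $M(\mathcal{R}_k)\ge0$ satisfy $\|[x^\top,u^\top]-[z_k^\top,v_k^\top]\|_2\le M(\mathcal{R}_k)$ for all $(x,u)\in\mathcal{R}_k$. Fix $(x,u)\in\mathcal{R}_k$. Let $s_{1,k},\dots,s_{n,k},s_{k,k},\tilde s_{k,k}$ be scores such that: - each of the tuples $(s_{1,k},\dots,s_{n,k},s_{k,k})$ and $(s_{1,k},\dots,s_{n,k},\tilde s_{k,k})$ consists of mutually independent random variables; - $s_{i,k}\sim S_{i,k}$ is the score $s_k(x_i,u_i,f(x_i,u_i))$ of calibration point $i$; - $s_{k,k}\sim S_{k,k}$ is the score at the nominal point; - $\tilde s_{k,k}=s_k(x,u,f(x,u))\sim\tilde S_{k,k}$ is the score at $(x,u)$. Assume $d_{\mathrm{TV}}(S_{i,k},S_{k,k})\le\epsilon\|[z_k^\top,v_k^\top]-[x_i^\top,u_i^\top]\|_2$ for all $i$. Assume also, for some $\hat\epsilon\le\epsilon$, that $d_{\mathrm{TV}}(S_{k,k},\tilde S_{k,k})\le\hat\epsilon\,\|[x^\top,u^\top]-[z_k^\top,v_k^\top]\|_2$. Then $$\Pr\big[\varepsilon(x,u)\in\mathcal{E}(z_k,v_k)\big]\ge 1-\alpha_k-2\sum_{i=1}^n\tilde w_i\, d_{\mathrm{TV}}(S_{i,k},S_{k,k})-\gamma(\mathcal{R}_k),\qquad \gamma(\mathcal{R}_k):=2\hat\epsilon\,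 M(\mathcal{R}_k).$$
   Context: Dynamics and model error: - The true deterministic dynamics are $x_{k+1}=f(x_k,u_k)$ with $f:\mathcal{X}\times\mathcal{U}\to\mathcal{X}$, $\mathcal{X}\subseteq\mathbb{R}^{n_x}$, $\mathcal{U}\subseteq\mathbb{R}^{n_u}$. - $\hat f$ is a learned model, and $\varepsilon(x,u):=f(x,u)-\hat f(x,u)$ is the model error. - $\mathbf{\Sigma}:\mathcal{X}\times\mathcal{U}\to\mathbb{R}^{n_x\times n_x}$ is a positive-definite-matrix-valued function. Nonconformity score: for a nominal pair $(z_k,v_k)$, define $$s_k(x,u,y):=\sqrt{(y-\hat f(x,u))^\top\mathbf{\Sigma}(z_k,v_k)^{-1}(y-\hat f(x,u))}.$$ Calibration data: $(x_i,u_i,f(x_i,u_i))$, $i=1,\dots,n$. Let $d_i:=\|[z_k^\top,v_k^\top]-[x_i^\top,u_i^\top]\|_2$. Weights: fix $\rho\in(0,1]$ and set $w_i=\rho^{d_i}$, $w_{\mathrm{test}}=1$. Normalize as $\tilde w_i=w_i/(1+\sum_j w_j)$ and $\tilde w_{\mathrm{test}}=1/(1+\sum_j w_j)$. Quantile: for $\alpha_k\in(0,1)$, $q_{1-\alpha_k}(z_k,v_k)$ is the $(1-\alpha_k)$-quantile of the weighted empirical distribution $\sum_{i=1}^n\tilde w_i\delta_{s_{i,k}}+\tilde w_{\mathrm{test}}\delta_{+\infty}$, where $s_{i,k}:=s_k(x_i,u_i,f(x_i,u_i))$. Error set: $$\mathcal{E}(z_k,v_k):=\{e\in\mathbb{R}^{n_x}:\sqrt{e^\top\mathbf{\Sigma}(z_k,v_k)^{-1}e}\le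 q_{1-\alpha_k}(z_k,v_k)\}.$$ Equivalently, $\mathcal{E}(z_k,v_k)=q_{1-\alpha_k}L\,\mathcal{B}^{n_x}$, where $L$ is the Cholesky factor of $\mathbf{\Sigma}(z_k,v_k)$ and $\mathcal{B}^{n_x}$ is the unit 2-norm ball. $d_{\mathrm{TV}}$ denotes the total-variation distance. *)

theory Defs
  imports "HOL-Probability.Probability"
begin

definition tv_dist :: "'a measure \<Rightarrow> 'a measure \<Rightarrow> real" where
  "tv_dist P Q = (SUP A \<in> sets P. \<bar>measure P A - measure Q A\<bar>)"

text \<open>(1-alpha)-quantile of the weighted empirical distribution
  sum_{i<n} w i delta_{s i} + w_test delta_{+infinity}; the point mass at +infinity
  is never counted at finite thresholds, and the quantile is +infinity if
  no finite threshold reaches level 1-alpha.\<close>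
definition weighted_quantile :: "real \<Rightarrow> (nat \<Rightarrow> real) \<Rightarrow> (nat \<Rightarrow> real) \<Rightarrow> nat \<Rightarrow> ereal" where
  "weighted_quantile alpha w s n =
     Inf {ereal t | t. 1 - alpha \<le> (\<Sum>i\<in>{i. i < n \<and> s i \<le> t}. w i)}"

definition ncscore :: "real^'n^'n \<Rightarrow> real^'n \<Rightarrow> real" where
  "ncscore Sig e = sqrt (e \<bullet> (matrix_inv Sig *v e))"

definition error_set :: "real^'n^'n \<Rightarrow> ereal \<Rightarrow> (real^'n) set" where
  "error_set Sig q = {e. ereal (ncscore Sig e) \<le> q}"

end

theory Submission
  imports Defs
begin

lemma quant_char:
  fixes w s :: "nat \<Rightarrow> real"
  assumes w: "\<forall>i<n. 0 \<le> w i" and al: "alpha < 1"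
  shows "ereal a \<le> weighted_quantile alpha w s n \<longleftrightarrow>
         (\<Sum>i<n. if s i < a then w i else 0) < 1 - alpha"
proof -
  have G: "(\<Sum>i\<in>{i. i < n \<and> s i \<le> t}. w i) = (\<Sum>i<n. if s i \<le> t then w i else 0)" for t
  proof -
    have "{i. i < n \<and> s i \<le> t} = {i\<in>{..<n}. s i \<le> t}" by auto
    then have "(\<Sum>i\<in>{i. i < n \<and> s i \<le> t}. w i) = sum w {i\<in>{..<n}. s i \<le> t}" by simp
    also have "\<dots> = (\<Sum>i<n. if s i \<le> t then w i else 0)" by (rule sum.inter_filter) simp
    finally show ?thesis .
  qed
  define S where "S = {ereal t | t. 1 - alpha \<le> (\<Sum>i\<in>{i. i < n \<and> s i \<le> t}. w i)}"
  have q: "weighted_quantile alpha w s n = Inf S" unfolding weighted_quantile_def S_def by simp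
  show ?thesis
  proof
    assume h: "ereal a \<le> weighted_quantile alpha w s n"
    show "(\<Sum>i<n. if s i < a then w i else 0) < 1 - alpha"
    proof (rule ccontr)
      assume c: "\<not> ?thesis"
      define T where "T = s ` {i. i < n \<and> s i < a}"
      have Tne: "T \<noteq> {}"
      proof
        assume "T = {}"
        then have "\<forall>i<n. \<not> s i < a" unfolding T_def by auto
        then have "(\<Sum>i<n. if s i < a then w i else 0) = 0" by simp
        with c al show False by simp
      qed
      have Tf: "finite T" unfolding T_def by simp
      define t where "t = Max T"
      have tT: "t \<in> T" using Tne Tf t_def by simp
      then have ta: "t < a" unfolding T_def by auto
      have eq: "(\<Sum>i<n. if s i \<le> t then w i else 0) = (\<Sum>i<n. if s i < a then w i else 0)"
      proof (rule sum.cong[OF refl])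
        fix i assume "i \<in> {..<n}"
        then have "s i < a \<Longrightarrow> s i \<le> t" using Tf unfolding t_def T_def by (auto intro!: Max_ge)
        then show "(if s i \<le> t then w i else 0) = (if s i < a then w i else 0)" using ta by auto
      qed
      have "ereal t \<in> S" unfolding S_def using G[of t] eq c by auto
      then have "Inf S \<le> ereal t" by (rule Inf_lower)
      moreover have "ereal a \<le> Inf S" using h q by simp
      ultimately have "ereal a \<le> ereal t" by (rule order_trans[rotated])
      with ta show False by simp
    qed
  next
    assume h: "(\<Sum>i<n. if s i < a then w i else 0) < 1 - alpha"
    have "ereal a \<le> Inf S"
    proof (rule Inf_greatest)
      fix e assume "e \<in> S"
      then obtain t where e: "e = ereal t" and t: "1 - alpha \<le> (\<Sum>i<n. if s i \<le> t then w i else 0)"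
        unfolding S_def using G by auto
      show "ereal a \<le> e"
      proof (rule ccontr)
        assume "\<not> ereal a \<le> e"
        then have ta: "t < a" using e by simp
        have "(\<Sum>i<n. if s i \<le> t then w i else 0) \<le> (\<Sum>i<n. if s i < a then w i else 0)"
          using w ta by (intro sum_mono) auto
        with t h show False by simp
      qed
    qed
    then show "ereal a \<le> weighted_quantile alpha w s n" using q by simp
  qed
qed

definition sw :: "nat \<Rightarrow> nat \<Rightarrow> nat \<Rightarrow> nat" where
  "sw K n i = (if i = K then n else if i = n then K else i)"

definition Hs :: "(nat \<Rightarrow> real) \<Rightarrow> nat \<Rightarrow> (nat \<Rightarrow> real) \<Rightarrow> nat \<Rightarrow> real" where
  "Hs wt n y K = (\<Sum>i\<le>n. if y i < y K then wt i else 0)"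

definition cov :: "(nat \<Rightarrow> real) \<Rightarrow> nat \<Rightarrow> real \<Rightarrow> (nat \<Rightarrow> real) \<Rightarrow> bool" where
  "cov wt n alpha y \<longleftrightarrow> (\<Sum>i<n. if y i < y n then wt i else 0) < 1 - alpha"

lemma claim1:
  assumes K: "K \<le> n" and wt: "\<forall>i\<le>n. 0 \<le> wt i" and wK: "wt K \<le> wt n"
    and nc: "\<not> cov wt n alpha (\<lambda>i. y (sw K n i))"
  shows "1 - alpha \<le> Hs wt n y K"
proof -
  have ss: "sw K n (sw K n i) = i" for i unfolding sw_def by auto
  have sn: "sw K n n = K" unfolding sw_def by auto
  have "Hs wt n y K = (\<Sum>i\<le>n. if y (sw K n i) < y K then wt (sw K n i) else 0)"
    unfolding Hs_def
    by (rule sum.reindex_bij_witness[of _ "sw K n" "sw K n"]) (auto simp: ss, auto simp: sw_def K)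
  also have "\<dots> = (\<Sum>i<n. if y (sw K n i) < y K then wt (sw K n i) else 0) +
       (if y (sw K n n) < y K then wt (sw K n n) else 0)"
    by (simp add: lessThan_Suc_atMost[symmetric])
  also have "\<dots> \<ge> (\<Sum>i<n. if y (sw K n i) < y K then wt (sw K n i) else 0)"
    using wt K sn by simp
  finally have 1: "(\<Sum>i<n. if y (sw K n i) < y K then wt (sw K n i) else 0) \<le> Hs wt n y K" .
  have 2: "(\<Sum>i<n. if y (sw K n i) < y K then wt i else 0) \<le>
        (\<Sum>i<n. if y (sw K n i) < y K then wt (sw K n i) else 0)"
  proof (rule sum_mono)
    fix i assume "i \<in> {..<n}"
    then show "(if y (sw K n i) < y K then wt i else 0) \<le> (if y (sw K n i) < y K then wt (sw K n i) else 0)"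
      using wK unfolding sw_def by auto
  qed
  from nc have "1 - alpha \<le> (\<Sum>i<n. if y (sw K n i) < y K then wt i else 0)"
    unfolding cov_def using sn by simp
  with 1 2 show ?thesis by simp
qed

lemma claim2:
  assumes wt: "\<forall>i\<le>n. 0 \<le> wt i" and s1: "(\<Sum>i\<le>n. wt i) = 1" and al: "0 \<le> alpha"
  shows "(\<Sum>K\<le>n. wt K * (if 1 - alpha \<le> Hs wt n y K then 1 else 0)) \<le> alpha"
proof -
  define S where "S = {K\<in>{..n}. 1 - alpha \<le> Hs wt n y K}"
  have Ssub: "S \<subseteq> {..n}" unfolding S_def by blast
  have fS: "finite S" using Ssub finite_subset by blast
  have L0: "(\<Sum>K\<in>S. wt K) = (\<Sum>K\<le>n. if 1 - alpha \<le> Hs wt n y K then wt K else 0)"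
    unfolding S_def by (rule sum.inter_filter) simp
  have L1: "(\<Sum>K\<le>n. wt K * (if 1 - alpha \<le> Hs wt n y K then 1 else 0)) = (\<Sum>K\<le>n. if 1 - alpha \<le> Hs wt n y K then wt K else 0)"
    by (rule sum.cong) auto
  have L: "(\<Sum>K\<le>n. wt K * (if 1 - alpha \<le> Hs wt n y K then 1 else 0)) = (\<Sum>K\<in>S. wt K)"
    using L0 L1 by simp
  show ?thesis
  proof (cases "S = {}")
    case True then show ?thesis using L al by simp
  next
    case False
    define m where "m = Min (y ` S)"
    have "m \<in> y ` S" unfolding m_def using fS False by (intro Min_in) auto
    then obtain K0 where K0S: "K0 \<in> S" and K0m: "y K0 = m" by blast
    have K0min: "\<forall>K\<in>S. y K0 \<le> y K" unfolding K0m m_def using fS by auto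
    have sp: "(\<Sum>i\<le>n. wt i) = (\<Sum>i\<le>n. if i \<in> S then wt i else 0) + (\<Sum>i\<le>n. if i \<in> S then 0 else wt i)"
      by (subst sum.distrib[symmetric]) (rule sum.cong, auto)
    have sS: "(\<Sum>i\<le>n. if i \<in> S then wt i else 0) = (\<Sum>i\<in>S. wt i)"
    proof -
      have "(\<Sum>i\<le>n. if i \<in> S then wt i else 0) = sum wt ({..n} \<inter> S)"
        by (rule sum.inter_restrict[symmetric]) simp
      also have "{..n} \<inter> S = S" using Ssub by blast
      finally show ?thesis .
    qed
    have "1 - alpha \<le> Hs wt n y K0" using K0S unfolding S_def by blast
    also have "\<dots> \<le> (\<Sum>i\<le>n. if i \<in> S then 0 else wt i)"
      unfolding Hs_def
    proof (rule sum_mono)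
      fix i assume i: "i \<in> {..n}"
      show "(if y i < y K0 then wt i else 0) \<le> (if i \<in> S then 0 else wt i)"
        using K0min wt i by (cases "i \<in> S") force+
    qed
    finally show ?thesis using L sp sS s1 by linarith
  qed
qed

lemma tv_ge:
  assumes P: "prob_space P" and Q: "prob_space Q" and A: "A \<in> sets P"
  shows "\<bar>measure P A - measure Q A\<bar> \<le> tv_dist P Q"
  unfolding tv_dist_def
proof (rule cSUP_upper[OF A])
  show "bdd_above ((\<lambda>A. \<bar>measure P A - measure Q A\<bar>) ` sets P)"
  proof (rule bdd_aboveI[where M=1])
    fix x assume "x \<in> (\<lambda>A. \<bar>measure P A - measure Q A\<bar>) ` sets P"
    then obtain B where x: "x = \<bar>measure P B - measure Q B\<bar>" by auto
    have "measure P B \<le> 1" "measure Q B \<le> 1"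
      using prob_space.prob_le_1[OF P] prob_space.prob_le_1[OF Q] by auto
    moreover have "0 \<le> measure P B" "0 \<le> measure Q B" by (rule measure_nonneg)+
    ultimately show "x \<le> 1" using x by linarith
  qed
qed

lemma tv_nonneg:
  assumes P: "prob_space P" and Q: "prob_space Q"
  shows "0 \<le> tv_dist P Q"
  using tv_ge[OF P Q, of "{}"] by simp

lemma tv_sym:
  assumes "sets P = sets Q"
  shows "tv_dist P Q = tv_dist Q P"
proof -
  have "\<And>A. \<bar>measure P A - measure Q A\<bar> = \<bar>measure Q A - measure P A\<bar>" by (rule abs_minus_commute)
  then show ?thesis unfolding tv_dist_def assms by simp
qed

lemma replace_one:
  fixes L :: "'i \<Rightarrow> 'a measure"
  assumes L: "\<And>i. prob_space (L i)" and Q: "prob_space Q" and sQ: "sets Q = sets (L j)"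
    and I: "finite I" "j \<in> I" and A: "A \<in> sets (PiM I L)"
  shows "measure (PiM I L) A \<le> measure (PiM I (L(j:=Q))) A + tv_dist (L j) Q"
proof -
  define L' where "L' = L(j:=Q)"
  have L': "\<And>i. prob_space (L' i)" using L Q by (simp add: L'_def)
  interpret PL: product_sigma_finite L
    by (rule product_sigma_finite.intro, rule prob_space_imp_sigma_finite, rule L)
  interpret PL': product_sigma_finite L'
    by (rule product_sigma_finite.intro, rule prob_space_imp_sigma_finite, rule L')
  define J where "J = I - {j}"
  have IJ: "I = insert j J" "j \<notin> J" "finite J" using I by (auto simp: J_def)
  have sA': "sets (PiM I L') = sets (PiM I L)"
    by (rule sets_PiM_cong) (auto simp: L'_def sQ)
  have A': "A \<in> sets (PiM I L')" using A sA' by simp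
  have PJ: "PiM J L' = PiM J L" by (rule PiM_cong) (auto simp: L'_def J_def)
  interpret PJ: prob_space "PiM J L" using L IJ by (intro prob_space_PiM) auto
  have spQ: "space Q = space (L j)" using sQ by (rule sets_eq_imp_space_eq)
  have L'j: "L' j = Q" by (simp add: L'_def)
  have mA[measurable]: "indicator A \<in> borel_measurable (PiM (insert j J) L)"
    using A IJ by simp
  have mA'[measurable]: "indicator A \<in> borel_measurable (PiM (insert j J) L')"
    using A' IJ by simp
  have e1: "emeasure (PiM I L) A = (\<integral>\<^sup>+ x. (\<integral>\<^sup>+ y. indicator A (x(j := y)) \<partial>L j) \<partial>PiM J L)"
  proof -
    have "emeasure (PiM I L) A = (\<integral>\<^sup>+ x. indicator A x \<partial>PiM I L)"
      by (rule nn_integral_indicator[symmetric]) (rule A)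
    also have "\<dots> = (\<integral>\<^sup>+ x. (\<integral>\<^sup>+ y. indicator A (x(j := y)) \<partial>L j) \<partial>PiM J L)"
      unfolding IJ(1) by (rule PL.product_nn_integral_insert[OF IJ(3) IJ(2) mA])
    finally show ?thesis .
  qed
  have e2: "emeasure (PiM I L') A = (\<integral>\<^sup>+ x. (\<integral>\<^sup>+ y. indicator A (x(j := y)) \<partial>Q) \<partial>PiM J L)"
  proof -
    have "emeasure (PiM I L') A = (\<integral>\<^sup>+ x. indicator A x \<partial>PiM I L')"
      by (rule nn_integral_indicator[symmetric]) (rule A')
    also have "\<dots> = (\<integral>\<^sup>+ x. (\<integral>\<^sup>+ y. indicator A (x(j := y)) \<partial>L' j) \<partial>PiM J L')"
      unfolding IJ(1) by (rule PL'.product_nn_integral_insert[OF IJ(3) IJ(2) mA'])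
    finally show ?thesis unfolding PJ L'j .
  qed
  have mG: "(\<lambda>x. \<integral>\<^sup>+ y. indicator A (x(j := y)) \<partial>Q) \<in> borel_measurable (PiM J L)"
  proof -
    have "(\<lambda>x. \<integral>\<^sup>+ y. indicator A (x(j := y)) \<partial>L' j) \<in> borel_measurable (PiM J L')"
    proof -
      have upd: "(\<lambda>p. (fst p)(j := snd p)) \<in> measurable (PiM J L' \<Otimes>\<^sub>M L' j) (PiM (insert j J) L')"
        by (rule measurable_fun_upd[where J=J]) auto
      have "(\<lambda>p. indicator A ((fst p)(j := snd p)) :: ennreal) \<in> borel_measurable (PiM J L' \<Otimes>\<^sub>M L' j)"
        by (rule measurable_compose[OF upd mA'])
      then have "case_prod (\<lambda>x y. indicator A (x(j := y)) :: ennreal) \<in> borel_measurable (PiM J L' \<Otimes>\<^sub>M L' j)"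
        by (simp add: case_prod_unfold)
      then show ?thesis by (rule sigma_finite_measure.borel_measurable_nn_integral[OF prob_space_imp_sigma_finite[OF L']])
    qed
    then show ?thesis by (simp add: PJ L'j)
  qed
  define t where "t = tv_dist (L j) Q"
  have t0: "0 \<le> t" unfolding t_def by (rule tv_nonneg[OF L Q])
  have pw: "(\<integral>\<^sup>+ y. indicator A (x(j := y)) \<partial>L j) \<le> (\<integral>\<^sup>+ y. indicator A (x(j := y)) \<partial>Q) + ennreal t"
    if x: "x \<in> space (PiM J L)" for x
  proof -
    define S where "S = (\<lambda>y. x(j := y)) -` A \<inter> space (L j)"
    have mu: "(\<lambda>y. x(j := y)) \<in> measurable (L j) (PiM (insert j J) L)"
      by (rule measurable_component_update[OF x IJ(2)])
    have S: "S \<in> sets (L j)" unfolding S_def using mu A IJ by (simp add: measurable_sets)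
    have SQ: "S \<in> sets Q" using S sQ by simp
    have i1: "(\<integral>\<^sup>+ y. indicator A (x(j := y)) \<partial>L j) = emeasure (L j) S"
      by (subst nn_integral_indicator[OF S, symmetric]) (auto intro!: nn_integral_cong simp: S_def indicator_def)
    have i2: "(\<integral>\<^sup>+ y. indicator A (x(j := y)) \<partial>Q) = emeasure Q S"
      by (subst nn_integral_indicator[OF SQ, symmetric]) (auto intro!: nn_integral_cong simp: S_def indicator_def spQ)
    have "measure (L j) S - measure Q S \<le> t"
      using tv_ge[OF L Q S] unfolding t_def by simp
    then have "emeasure (L j) S \<le> ennreal (measure Q S + t)"
      by (simp add: finite_measure.emeasure_eq_measure[OF prob_space.axioms(1)[OF L]] ennreal_leI)
    also have "\<dots> = emeasure Q S + ennreal t"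
      by (simp add: finite_measure.emeasure_eq_measure[OF prob_space.axioms(1)[OF Q]] ennreal_plus t0 measure_nonneg)
    finally show ?thesis using i1 i2 by simp
  qed
  have "emeasure (PiM I L) A \<le> (\<integral>\<^sup>+ x. (\<integral>\<^sup>+ y. indicator A (x(j := y)) \<partial>Q) + ennreal t \<partial>PiM J L)"
    unfolding e1 by (rule nn_integral_mono) (rule pw)
  also have "\<dots> = emeasure (PiM I L') A + ennreal t"
    unfolding e2 using mG by (simp add: nn_integral_add PJ.emeasure_space_1)
  finally have fin: "emeasure (PiM I L) A \<le> emeasure (PiM I L') A + ennreal t" .
  interpret PI: prob_space "PiM I L" using L I by (intro prob_space_PiM) auto
  interpret PI': prob_space "PiM I L'" using L' I by (intro prob_space_PiM) auto
  from fin have "ennreal (measure (PiM I L) A) \<le> ennreal (measure (PiM I L') A + t)"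
    by (simp add: PI.emeasure_eq_measure PI'.emeasure_eq_measure ennreal_plus t0 measure_nonneg)
  then have "measure (PiM I L) A \<le> measure (PiM I L') A + t"
    using t0 by (subst (asm) ennreal_le_iff) (auto intro: add_nonneg_nonneg measure_nonneg)
  then show ?thesis unfolding L'_def t_def .
qed

lemma meas_cov:
  "{y \<in> space (PiM {..n} (\<lambda>_. borel :: real measure)). cov wt n alpha y} \<in> sets (PiM {..n} (\<lambda>_. borel :: real measure))"
  unfolding cov_def by measurable

lemma meas_Hs:
  assumes "K \<le> n"
  shows "{y \<in> space (PiM {..n} (\<lambda>_. borel :: real measure)). 1 - alpha \<le> Hs wt n y K} \<in> sets (PiM {..n} (\<lambda>_. borel :: real measure))"
proof -
  have K[simp]: "K \<in> {..n}" using assms by simp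
  show ?thesis unfolding Hs_def by measurable (use assms in auto)
qed

lemma cov_local:
  assumes "\<And>i. i \<le> n \<Longrightarrow> y i = z i"
  shows "cov wt n alpha y = cov wt n alpha z"
proof -
  have "(\<Sum>i<n. if y i < y n then wt i else 0) = (\<Sum>i<n. if z i < z n then wt i else 0)"
    using assms by (intro sum.cong) auto
  then show ?thesis unfolding cov_def by simp
qed

lemma main_prod:
  fixes L :: "nat \<Rightarrow> real measure" and wt :: "nat \<Rightarrow> real"
  assumes L: "\<And>i. prob_space (L i)" and sL: "\<And>i. sets (L i) = sets borel"
    and wt: "\<forall>i\<le>n. 0 \<le> wt i" and s1: "(\<Sum>i\<le>n. wt i) = 1" and wn: "\<forall>i<n. wt i \<le> wt n"
    and al: "0 \<le> alpha"
  shows "1 - alpha - 2 * (\<Sum>i<n. wt i * tv_dist (L i) (L n))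
           \<le> measure (PiM {..n} L) {y \<in> space (PiM {..n} L). cov wt n alpha y}"
proof -
  define P where "P = PiM {..n} L"
  interpret P: prob_space P unfolding P_def using L by (intro prob_space_PiM) auto
  have sP: "sets (PiM {..n} M') = sets (PiM {..n} (\<lambda>_. borel :: real measure))"
    if "\<And>i. sets (M' i) = sets borel" for M' :: "nat \<Rightarrow> real measure"
    using that by (intro sets_PiM_cong) auto
  have spP: "space (PiM {..n} M') = space (PiM {..n} (\<lambda>_. borel :: real measure))"
    if "\<And>i. sets (M' i) = sets borel" for M' :: "nat \<Rightarrow> real measure"
    using sP[OF that] by (rule sets_eq_imp_space_eq)
  define B where "B = space (PiM {..n} (\<lambda>_. borel :: real measure))"
  have spB: "space P = B" unfolding P_def B_def by (rule spP[OF sL])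
  define C where "C = {y \<in> B. cov wt n alpha y}"
  define A where "A = B - C"
  define Str where "Str K = {y \<in> B. 1 - alpha \<le> Hs wt n y K}" for K
  have CB: "C \<in> sets (PiM {..n} (\<lambda>_. borel :: real measure))"
    unfolding C_def B_def by (rule meas_cov)
  have AB: "A \<in> sets (PiM {..n} (\<lambda>_. borel :: real measure))"
    unfolding A_def B_def by (rule sets.compl_sets[OF CB[unfolded B_def]])
  have StrB: "Str K \<in> sets (PiM {..n} (\<lambda>_. borel :: real measure))" if "K \<le> n" for K
    unfolding Str_def B_def using that by (rule meas_Hs)
  have inP: "X \<in> sets (PiM {..n} M')"
    if "X \<in> sets (PiM {..n} (\<lambda>_. borel :: real measure))" "\<And>i. sets (M' i) = sets borel"
    for X M' using that(1) sP[OF that(2)] by simp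
  have step: "measure P A \<le> measure P (Str K) + 2 * (if K < n then tv_dist (L K) (L n) else 0)"
    if K: "K \<le> n" for K
  proof (cases "K = n")
    case True
    have "A \<subseteq> Str K"
    proof
      fix y assume y: "y \<in> A"
      have "cov wt n alpha (\<lambda>i. y (sw n n i)) = cov wt n alpha y"
        by (intro cov_local) (simp add: sw_def)
      then have "\<not> cov wt n alpha (\<lambda>i. y (sw K n i))" using y True unfolding A_def C_def by simp
      then have "1 - alpha \<le> Hs wt n y K" using claim1[OF K wt] wn True by simp
      then show "y \<in> Str K" using y unfolding Str_def A_def by simp
    qed
    moreover have "Str K \<in> sets P" using inP[OF StrB[OF K] sL] unfolding P_def .
    ultimately have "measure P A \<le> measure P (Str K)"
      by (rule P.finite_measure_mono)
    then show ?thesis using True by simp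
  next
    case False
    then have Kn: "K < n" using K by simp
    define \<sigma> where "\<sigma> = sw K n"
    have \<sigma>in: "\<sigma> i \<in> {..n}" if "i \<in> {..n}" for i using that Kn unfolding \<sigma>_def sw_def by auto
    define L2 where "L2 = (\<lambda>i. L (\<sigma> i))"
    define f where "f = (\<lambda>\<omega>. \<lambda>i\<in>{..n}. \<omega> (\<sigma> i) :: real)"
    have L1p: "\<And>i. prob_space ((L(K := L n)) i)" using L by simp
    have r1: "measure P A \<le> measure (PiM {..n} (L(K := L n))) A + tv_dist (L K) (L n)"
      unfolding P_def
      by (rule replace_one[of L "L n" K "{..n}" A, OF L L _ _ _ inP[OF AB sL]]) (use K sL in auto)
    have r2: "measure (PiM {..n} (L(K := L n))) A \<le> measure (PiM {..n} ((L(K := L n))(n := L K))) A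
           + tv_dist ((L(K := L n)) n) (L K)"
      by (rule replace_one[of "L(K := L n)" "L K" n "{..n}" A, OF L1p L _ _ _ inP[OF AB]]) (use K Kn sL in auto)
    have tvs: "tv_dist ((L(K := L n)) n) (L K) = tv_dist (L K) (L n)"
      using Kn sL by (simp add: tv_sym)
    have PL2: "PiM {..n} ((L(K := L n))(n := L K)) = PiM {..n} L2"
      by (rule PiM_cong) (auto simp: L2_def \<sigma>_def sw_def)
    have inj: "inj_on \<sigma> {..n}"
      unfolding inj_on_def \<sigma>_def sw_def by auto
    have dist_eq: "distr P (PiM {..n} L2) f = PiM {..n} L2"
      unfolding P_def L2_def f_def
      by (rule distr_PiM_reindex[OF L inj]) (use \<sigma>in in auto)
    have fm: "f \<in> measurable P (PiM {..n} L2)"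
      unfolding P_def f_def L2_def
      by (intro measurable_restrict measurable_component_singleton \<sigma>in) auto
    have AL2: "A \<in> sets (PiM {..n} L2)" by (rule inP[OF AB]) (simp add: L2_def sL)
    have m2: "measure (PiM {..n} L2) A = measure P (f -` A \<inter> space P)"
    proof -
      have "measure (PiM {..n} L2) A = measure (distr P (PiM {..n} L2) f) A" by (simp add: dist_eq)
      also have "\<dots> = measure P (f -` A \<inter> space P)" by (rule measure_distr[OF fm AL2])
      finally show ?thesis .
    qed
    have sub: "f -` A \<inter> space P \<subseteq> Str K"
    proof
      fix y assume y: "y \<in> f -` A \<inter> space P"
      then have fyA: "f y \<in> A" and yB: "y \<in> B" using spB by auto
      have "cov wt n alpha (f y) = cov wt n alpha (\<lambda>i. y (sw K n i))"
        by (intro cov_local) (simp add: f_def \<sigma>_def)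
      then have "\<not> cov wt n alpha (\<lambda>i. y (sw K n i))" using fyA unfolding A_def C_def by simp
      then have "1 - alpha \<le> Hs wt n y K" using claim1[OF K wt] wn Kn by simp
      then show "y \<in> Str K" using yB unfolding Str_def by simp
    qed
    have "Str K \<in> sets P" using inP[OF StrB[OF K] sL] unfolding P_def .
    with sub have "measure P (f -` A \<inter> space P) \<le> measure P (Str K)"
      by (rule P.finite_measure_mono)
    then show ?thesis using r1 r2 tvs PL2 m2 Kn by simp
  qed
  have "measure P A = (\<Sum>K\<le>n. wt K * measure P A)"
    using s1 by (simp add: sum_distrib_right[symmetric])
  also have "\<dots> \<le> (\<Sum>K\<le>n. wt K * (measure P (Str K) + 2 * (if K < n then tv_dist (L K) (L n) else 0)))"
    using step wt by (intro sum_mono mult_left_mono) auto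
  also have "\<dots> = (\<Sum>K\<le>n. wt K * measure P (Str K)) + 2 * (\<Sum>K\<le>n. wt K * (if K < n then tv_dist (L K) (L n) else 0))"
    (is "_ = ?R")
  proof -
    have "(\<Sum>K\<le>n. wt K * (measure P (Str K) + 2 * (if K < n then tv_dist (L K) (L n) else 0)))
       = (\<Sum>K\<le>n. wt K * measure P (Str K) + 2 * (wt K * (if K < n then tv_dist (L K) (L n) else 0)))"
      by (rule sum.cong) (simp_all add: distrib_left)
    also have "\<dots> = ?R" by (simp only: sum.distrib sum_distrib_left)
    finally show ?thesis .
  qed
  also have "(\<Sum>K\<le>n. wt K * (if K < n then tv_dist (L K) (L n) else 0)) = (\<Sum>K<n. wt K * tv_dist (L K) (L n))"
    by (simp add: lessThan_Suc_atMost[symmetric])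
  also have "(\<Sum>K\<le>n. wt K * measure P (Str K)) \<le> alpha"
  proof -
    have StrP: "Str K \<in> sets P" if "K \<le> n" for K using inP[OF StrB[OF that] sL] unfolding P_def .
    have intK: "integrable P (\<lambda>y. wt K * indicator (Str K) y :: real)" if "K \<le> n" for K
      by (intro integrable_mult_right integrable_real_indicator StrP that) (simp add: P.emeasure_finite less_top[symmetric])
    have "(\<Sum>K\<le>n. wt K * measure P (Str K)) = (\<Sum>K\<le>n. integral\<^sup>L P (\<lambda>y. wt K * indicator (Str K) y))"
    proof (rule sum.cong[OF refl])
      fix K assume "K \<in> {..n}"
      then have "Str K \<in> sets P" using StrP by auto
      then have "Str K \<inter> space P = Str K" using sets.sets_into_space by blast
      then show "wt K * measure P (Str K) = integral\<^sup>L P (\<lambda>y. wt K * indicator (Str K) y)"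
        by simp
    qed
    also have "\<dots> = integral\<^sup>L P (\<lambda>y. \<Sum>K\<le>n. wt K * indicator (Str K) y)"
      by (rule Bochner_Integration.integral_sum[symmetric]) (use intK in auto)
    also have "\<dots> \<le> integral\<^sup>L P (\<lambda>y. alpha)"
    proof (rule integral_mono)
      show "integrable P (\<lambda>y. \<Sum>K\<le>n. wt K * indicator (Str K) y)"
        by (rule Bochner_Integration.integrable_sum) (use intK in auto)
      show "integrable P (\<lambda>y. alpha)" by simp
      fix y assume y: "y \<in> space P"
      have "(\<Sum>K\<le>n. wt K * indicator (Str K) y) = (\<Sum>K\<le>n. wt K * (if 1 - alpha \<le> Hs wt n y K then 1 else 0))"
        using y spB by (intro sum.cong) (auto simp: Str_def indicator_def)
      also have "\<dots> \<le> alpha" by (rule claim2[OF wt s1 al])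
      finally show "(\<Sum>K\<le>n. wt K * indicator (Str K) y) \<le> alpha" .
    qed
    also have "\<dots> = alpha" by (simp add: P.prob_space)
    finally show ?thesis .
  qed
  finally have Ale: "measure P A \<le> alpha + 2 * (\<Sum>K<n. wt K * tv_dist (L K) (L n))" by simp
  have AP: "A \<in> sets P" using inP[OF AB sL] unfolding P_def .
  have "C = space P - A" unfolding A_def C_def spB by auto
  then have "measure P C = 1 - measure P A" using P.prob_compl[OF AP] by simp
  moreover have "{y \<in> space (PiM {..n} L). cov wt n alpha y} = C"
    unfolding C_def using spB P_def by simp
  ultimately show ?thesis using Ale unfolding P_def by simp
qed

theorem theorem4:
  fixes M :: "'w measure"
    and n :: nat
    and z x :: "real^'nx" and v u :: "real^'nu"
    and xs :: "nat \<Rightarrow> real^'nx" and us :: "nat \<Rightarrow> real^'nu"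
    and R :: "((real^'nx) \<times> (real^'nu)) set"
    and MR rho alpha eps epshat :: real
    and Sig :: "real^'nx^'nx"
    and s :: "nat \<Rightarrow> 'w \<Rightarrow> real" and skk st :: "'w \<Rightarrow> real"
    and err :: "'w \<Rightarrow> real^'nx"
  assumes "prob_space M"
    and "(z, v) \<in> R" and "0 \<le> MR"
    and "\<forall>p\<in>R. dist p (z, v) \<le> MR"
    and "(x, u) \<in> R"
    and "0 < rho" and "rho \<le> 1"
    and "0 < alpha" and "alpha < 1"
    and "transpose Sig = Sig" and "\<forall>y. y \<noteq> 0 \<longrightarrow> 0 < y \<bullet> (Sig *v y)"
    and "prob_space.indep_vars M (\<lambda>_. borel) (\<lambda>i. if i = n then skk else s i) {..n}"
    and "prob_space.indep_vars M (\<lambda>_. borel) (\<lambda>i. if i = n then st else s i) {..n}"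
    and "\<forall>\<omega>\<in>space M. st \<omega> = ncscore Sig (err \<omega>)"
    and "\<forall>i<n. tv_dist (distr M borel (s i)) (distr M borel skk)
                \<le> eps * dist (z, v) (xs i, us i)"
    and "0 \<le> epshat" and "epshat \<le> eps"
    and "tv_dist (distr M borel skk) (distr M borel st) \<le> epshat * dist (x, u) (z, v)"
  shows
    "let w = (\<lambda>i. rho powr dist (z, v) (xs i, us i));
         wt = (\<lambda>i. w i / (1 + (\<Sum>j<n. w j)));
         q = (\<lambda>\<omega>. weighted_quantile alpha wt (\<lambda>i. s i \<omega>) n)
     in 1 - alpha - 2 * (\<Sum>i<n. wt i * tv_dist (distr M borel (s i)) (distr M borel skk))
          - 2 * epshat * MR
        \<le> measure M {\<omega> \<in> space M. err \<omega> \<in> error_set Sig (q \<omega>)}"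
proof -
  interpret M: prob_space M by (rule assms(1))
  note ind1 = assms(12) and ind2 = assms(13)
  define w where "w = (\<lambda>i. rho powr dist (z, v) (xs i, us i))"
  define S where "S = (\<Sum>j<n. w j)"
  define wt where "wt = (\<lambda>i. w i / (1 + S))"
  define q where "q = (\<lambda>\<omega>. weighted_quantile alpha wt (\<lambda>i. s i \<omega>) n)"
  define wtf where "wtf = (\<lambda>i. if i < n then wt i else 1 / (1 + S))"
  have wpos: "0 < w i" for i unfolding w_def using assms(6) by simp
  have wle1: "w i \<le> 1" for i
  proof -
    have "rho powr dist (z, v) (xs i, us i) \<le> 1 powr dist (z, v) (xs i, us i)"
      using assms(6,7) by (intro powr_mono2) auto
    then show ?thesis unfolding w_def by simp
  qed
  have S0: "0 \<le> S" unfolding S_def using wpos by (intro sum_nonneg) (simp add: less_imp_le)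
  have wt0: "\<forall>i<n. 0 \<le> wt i" unfolding wt_def using wpos S0 by (simp add: less_imp_le)
  have wtf0: "\<forall>i\<le>n. 0 \<le> wtf i" unfolding wtf_def wt_def using wpos S0 by (simp add: less_imp_le)
  have wtf1: "(\<Sum>i\<le>n. wtf i) = 1"
  proof -
    have "(\<Sum>i\<le>n. wtf i) = (\<Sum>i<n. wtf i) + wtf n" by (simp add: lessThan_Suc_atMost[symmetric])
    also have "(\<Sum>i<n. wtf i) = (\<Sum>i<n. w i / (1 + S))" unfolding wtf_def wt_def by (rule sum.cong) auto
    also have "\<dots> = S / (1 + S)" unfolding S_def by (simp add: sum_divide_distrib)
    also have "wtf n = 1 / (1 + S)" unfolding wtf_def by simp
    finally show ?thesis using S0 by (simp add: field_simps)
  qed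
  have wtfn: "\<forall>i<n. wtf i \<le> wtf n"
    unfolding wtf_def wt_def using wle1 S0 by (simp add: divide_right_mono)
  define X where "X = (\<lambda>i. if i = n then skk else s i)"
  define Y where "Y = (\<lambda>i. if i = n then st else s i)"
  have Xm: "X i \<in> borel_measurable M" if "i \<le> n" for i
    using ind1 that unfolding M.indep_vars_def2 X_def by auto
  have Ym: "Y i \<in> borel_measurable M" if "i \<le> n" for i
    using ind2 that unfolding M.indep_vars_def2 Y_def by auto
  define L where "L = (\<lambda>i. if i \<le> n then distr M borel (X i) else return borel (0::real))"
  have Lp: "prob_space (L i)" for i
    unfolding L_def using Xm by (auto intro: M.prob_space_distr prob_space_return)
  have sL: "sets (L i) = sets borel" for i unfolding L_def by simp
  define Pt where "Pt = distr M borel st"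
  have Ptp: "prob_space Pt" unfolding Pt_def using Ym[of n] unfolding Y_def by (auto intro: M.prob_space_distr)
  define B where "B = space (PiM {..n} (\<lambda>_. borel :: real measure))"
  define Cov where "Cov = {y \<in> B. cov wtf n alpha y}"
  have spL: "space (PiM {..n} M') = B" if "\<And>i. sets (M' i) = sets borel" for M' :: "nat \<Rightarrow> real measure"
    unfolding B_def using that by (intro sets_eq_imp_space_eq sets_PiM_cong) auto
  have setsL: "sets (PiM {..n} M') = sets (PiM {..n} (\<lambda>_. borel :: real measure))" if "\<And>i. sets (M' i) = sets borel" for M' :: "nat \<Rightarrow> real measure"
    using that by (intro sets_PiM_cong) auto
  have CovB: "Cov \<in> sets (PiM {..n} (\<lambda>_. borel :: real measure))"
    unfolding Cov_def B_def by (rule meas_cov)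
  have main: "1 - alpha - 2 * (\<Sum>i<n. wtf i * tv_dist (L i) (L n)) \<le> measure (PiM {..n} L) Cov"
    using main_prod[where L=L and wt=wtf and n=n and alpha=alpha, OF Lp sL wtf0 wtf1 wtfn] assms(8) spL[OF sL] unfolding Cov_def by simp
  have r: "measure (PiM {..n} L) Cov \<le> measure (PiM {..n} (L(n := Pt))) Cov + tv_dist (L n) Pt"
    by (rule replace_one[of L Pt n "{..n}" Cov, OF Lp Ptp _ _ _ ]) (auto simp: sL Pt_def setsL[OF sL] CovB)
  have PY: "PiM {..n} (L(n := Pt)) = PiM {..n} (\<lambda>i. distr M borel (Y i))"
    by (rule PiM_cong) (auto simp: L_def Pt_def X_def Y_def)
  have dY: "distr M (PiM {..n} (\<lambda>_. borel)) (\<lambda>\<omega>. \<lambda>i\<in>{..n}. Y i \<omega>) = PiM {..n} (\<lambda>i. distr M borel (Y i))"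
    using ind2 unfolding Y_def[symmetric]
    by (subst (asm) M.indep_vars_iff_distr_eq_PiM') (use Ym in auto)
  have Ymeas: "(\<lambda>\<omega>. \<lambda>i\<in>{..n}. Y i \<omega>) \<in> measurable M (PiM {..n} (\<lambda>_. borel :: real measure))"
    using Ym by (intro measurable_restrict) auto
  have mY: "measure (PiM {..n} (L(n := Pt))) Cov = measure M ((\<lambda>\<omega>. \<lambda>i\<in>{..n}. Y i \<omega>) -` Cov \<inter> space M)"
    unfolding PY dY[symmetric] by (rule measure_distr[OF Ymeas CovB])
  have evt: "(\<lambda>\<omega>. \<lambda>i\<in>{..n}. Y i \<omega>) -` Cov \<inter> space M = {\<omega> \<in> space M. err \<omega> \<in> error_set Sig (q \<omega>)}"
  proof (intro set_eqI iffI)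
    fix \<omega>
    have inB: "(\<lambda>i\<in>{..n}. Y i \<omega>) \<in> B" unfolding B_def by (simp add: space_PiM)
    have c1: "cov wtf n alpha (\<lambda>i\<in>{..n}. Y i \<omega>) = cov wtf n alpha (\<lambda>i. Y i \<omega>)"
      by (rule cov_local) simp
    have c2: "cov wtf n alpha (\<lambda>i. Y i \<omega>) \<longleftrightarrow> (\<Sum>i<n. if s i \<omega> < st \<omega> then wt i else 0) < 1 - alpha"
    proof -
      have "(\<Sum>i<n. if Y i \<omega> < Y n \<omega> then wtf i else 0) = (\<Sum>i<n. if s i \<omega> < st \<omega> then wt i else 0)"
        unfolding Y_def wtf_def by (rule sum.cong) auto
      then show ?thesis unfolding cov_def by simp
    qed
    have c3: "\<omega> \<in> space M \<Longrightarrow> err \<omega> \<in> error_set Sig (q \<omega>) \<longleftrightarrow> ereal (st \<omega>) \<le> q \<omega>"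
      using assms(14) unfolding error_set_def by simp
    have c4: "ereal (st \<omega>) \<le> q \<omega> \<longleftrightarrow> (\<Sum>i<n. if s i \<omega> < st \<omega> then wt i else 0) < 1 - alpha"
      unfolding q_def by (rule quant_char[OF wt0 assms(9)])
    show "\<omega> \<in> (\<lambda>\<omega>. \<lambda>i\<in>{..n}. Y i \<omega>) -` Cov \<inter> space M \<Longrightarrow> \<omega> \<in> {\<omega> \<in> space M. err \<omega> \<in> error_set Sig (q \<omega>)}"
      using c1 c2 c3 c4 unfolding Cov_def by auto
    show "\<omega> \<in> {\<omega> \<in> space M. err \<omega> \<in> error_set Sig (q \<omega>)} \<Longrightarrow> \<omega> \<in> (\<lambda>\<omega>. \<lambda>i\<in>{..n}. Y i \<omega>) -` Cov \<inter> space M"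
      using c1 c2 c3 c4 inB unfolding Cov_def by auto
  qed
  have tvsum: "(\<Sum>i<n. wtf i * tv_dist (L i) (L n)) = (\<Sum>i<n. wt i * tv_dist (distr M borel (s i)) (distr M borel skk))"
    unfolding wtf_def L_def X_def by (rule sum.cong) auto
  have tvt: "tv_dist (L n) Pt \<le> epshat * dist (x, u) (z, v)"
    using assms(18) unfolding L_def X_def Pt_def by simp
  have dMR: "dist (x, u) (z, v) \<le> MR" using assms(4,5) by blast
  have "epshat * dist (x, u) (z, v) \<le> epshat * MR" by (rule mult_left_mono[OF dMR assms(16)])
  also have "\<dots> \<le> 2 * epshat * MR" using assms(3,16) by simp
  finally have tvt2: "tv_dist (L n) Pt \<le> 2 * epshat * MR" using tvt by simp
  have fin: "1 - alpha - 2 * (\<Sum>i<n. wt i * tv_dist (distr M borel (s i)) (distr M borel skk)) - 2 * epshat * MR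
      \<le> measure M {\<omega> \<in> space M. err \<omega> \<in> error_set Sig (q \<omega>)}"
    using main r mY evt tvsum tvt2 by simp
  show ?thesis unfolding Let_def using fin unfolding q_def wt_def w_def S_def .
qed

end
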